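(* Let $K\subset\mathbb{R}^d$ be compact, let $m\ge1$, let $k_1,\dots,k_m\ge 0$ be integers, let $\alpha_1,\dots,\alpha_m\in\mathbb{R}$, and for each $i$ let $h^{(k_i)}$ be a $k_i$-order hinge function on $\mathbb{R}^d$. Then there exists a two-layer Morph-Net all of whose morphological neurons are dilation neurons (no erosion neurons) whose output $N({\bm{x}})$ satisfies $N({\bm{x}})=\sum_{i=1}^m\alpha_i h^{(k_i)}({\bm{x}})$ for all ${\bm{x}}\in K$.
   Context: For ${\bm{x}}\in\mathbb{R}^p$ write ${\bm{x}}'=(x_1,\dots,x_p,0)\in\mathbb{R}^{p+1}$ (augmented input). For a structuring element ${\bm{s}}\in\mathbb{R}^{p+1}$, the dilation neuron computes ${\bm{x}}\oplus{\bm{s}}=\max_{1\le k\le p+1}(x'_k+s_k)$ and the erosion neuron computes ${\bm{x}}\ominus{\bm{s}}=\min_{1\le k\le p+1}(x'_k-s_k)$. A dilation-erosion layer applied to ${\bm{y}}\in\mathbb{R}^p$ consists of finitely many dilation and erosion neurons (each with its own structuring element in $\mathbb{R}^{p+1}$) all applied to ${\bm{y}}$, and outputs the vector of their values. A linear combination layer is an affine map ${\bm{z}}\mapsto A{\bm{z}}+{\bm{c}}$. A two-layer Morph-Net $N:\mathbb{R}^d\to\mathbb{R}$ is the composition: dilation-erosion layer on ${\bm{x}}\in\mathbb{R}^d$, then a linear combination layer, then a second dilation-erosion layer applied to the resulting vector, then a linear combination layer with a single real output. A $k$-order hinge function on $\mathbb{R}^d$ is a function of the form $h^{(k)}({\bm{x}})=\pm\max\{{\bm{w}}_1^\top{\bm{x}}+b_1,\dots,{\bm{w}}_{k+1}^\top{\bm{x}}+b_{k+1}\}$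 with ${\bm{w}}_r\in\mathbb{R}^d$, $b_r\in\mathbb{R}$. *)

theory Defs
  imports "HOL-Analysis.Analysis"
begin

text \<open>The augmented input x' has the extra coordinate None with value 0.
  A structuring element is a function on the augmented index set.\<close>

definition aug :: "('i \<Rightarrow> real) \<Rightarrow> 'i option \<Rightarrow> real" where
  "aug x k = (case k of None \<Rightarrow> 0 | Some i \<Rightarrow> x i)"

definition dil :: "'i set \<Rightarrow> ('i \<Rightarrow> real) \<Rightarrow> ('i option \<Rightarrow> real) \<Rightarrow> real" where
  "dil I x s = Max ((\<lambda>k. aug x k + s k) ` insert None (Some ` I))"

definition ero :: "'i set \<Rightarrow> ('i \<Rightarrow> real) \<Rightarrow> ('i option \<Rightarrow> real) \<Rightarrow> real" where
  "ero I x s = Min ((\<lambda>k. aug x k - s k) ` insert None (Some ` I))"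

datatype 'i neuron = Dil "'i option \<Rightarrow> real" | Ero "'i option \<Rightarrow> real"

fun neuron_apply :: "'i set \<Rightarrow> 'i neuron \<Rightarrow> ('i \<Rightarrow> real) \<Rightarrow> real" where
  "neuron_apply I (Dil s) x = dil I x s"
| "neuron_apply I (Ero s) x = ero I x s"

fun is_dil :: "'i neuron \<Rightarrow> bool" where
  "is_dil (Dil _) = True"
| "is_dil (Ero _) = False"

text \<open>Two-layer Morph-Net on real^'d:
  MorphNet L1 A1 c1 q L2 a c :
  L1 = first dilation-erosion layer (neurons on the input, index set UNIV :: 'd set),
  (A1, c1) = linear combination layer with q outputs (input dimension = length L1),
  L2 = second dilation-erosion layer on the q-dimensional vector (index set {..<q}),
  (a, c) = final linear layer with a single real output.\<close>

datatype 'd morphnet =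
  MorphNet "'d neuron list" "nat \<Rightarrow> nat \<Rightarrow> real" "nat \<Rightarrow> real" nat
           "nat neuron list" "nat \<Rightarrow> real" real

fun morphnet_eval :: "'d::finite morphnet \<Rightarrow> real^'d \<Rightarrow> real" where
  "morphnet_eval (MorphNet L1 A1 c1 q L2 a c) x =
     (let z1 = (\<lambda>j. neuron_apply UNIV (L1 ! j) (\<lambda>i. x $ i));
          y  = (\<lambda>i. (\<Sum>j<length L1. A1 i j * z1 j) + c1 i);
          z2 = (\<lambda>j. neuron_apply {..<q} (L2 ! j) y)
      in (\<Sum>j<length L2. a j * z2 j) + c)"

fun dilation_only :: "'d morphnet \<Rightarrow> bool" where
  "dilation_only (MorphNet L1 A1 c1 q L2 a c) =
     ((\<forall>n\<in>set L1. is_dil n) \<and> (\<forall>n\<in>set L2. is_dil n))"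

definition is_hinge :: "nat \<Rightarrow> (real^'d \<Rightarrow> real) \<Rightarrow> bool" where
  "is_hinge k h \<longleftrightarrow> (\<exists>\<sigma> (w :: nat \<Rightarrow> real^'d) (b :: nat \<Rightarrow> real).
      (\<sigma> = 1 \<or> \<sigma> = -1) \<and> h = (\<lambda>x. \<sigma> * Max ((\<lambda>r. w r \<bullet> x + b r) ` {..k})))"

end

theory Submission
  imports Defs "HOL-Library.Nat_Bijection"
begin

lemma dil_select:
  assumes fin: "finite I" and TI: "T \<subseteq> I" and Tne: "T \<noteq> {}"
    and bnd: "\<forall>i\<in>I. \<bar>v i\<bar> \<le> C" and M: "M = 2*C+1"
  shows "dil I v (\<lambda>k. case k of None \<Rightarrow> -M | Some i \<Rightarrow> if i \<in> T then 0 else -M) = Max (v ` T)"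
proof -
  have finT: "finite T" using fin TI finite_subset by blast
  obtain t where t: "t \<in> T" "v t = Max (v ` T)"
  proof -
    have "Max (v ` T) \<in> v ` T" using finT Tne by (intro Max_in) auto
    then show ?thesis using that by (metis imageE)
  qed
  have vt: "\<bar>v t\<bar> \<le> C" using bnd t(1) TI by blast
  show ?thesis unfolding dil_def
  proof (rule Max_eqI)
    show "finite ((\<lambda>k. aug v k + (case k of None \<Rightarrow> - M | Some i \<Rightarrow> if i \<in> T then 0 else - M)) ` insert None (Some ` I))"
      using fin by auto
  next
    fix y assume "y \<in> (\<lambda>k. aug v k + (case k of None \<Rightarrow> - M | Some i \<Rightarrow> if i \<in> T then 0 else - M)) ` insert None (Some ` I)"
    then obtain k where k: "k \<in> insert None (Some ` I)"
      and y: "y = aug v k + (case k of None \<Rightarrow> - M | Some i \<Rightarrow> if i \<in> T then 0 else - M)" by (rule imageE) blast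
    show "y \<le> Max (v ` T)"
    proof (cases k)
      case None then show ?thesis using y vt t M by (simp add: aug_def)
    next
      case (Some i)
      with k have iI: "i \<in> I" by auto
      show ?thesis
      proof (cases "i \<in> T")
        case True then show ?thesis using y Some finT by (simp add: aug_def)
      next
        case False then show ?thesis using y Some bnd iI vt t M by (force simp add: aug_def abs_le_iff)
      qed
    qed
  next
    show "Max (v ` T) \<in> (\<lambda>k. aug v k + (case k of None \<Rightarrow> - M | Some i \<Rightarrow> if i \<in> T then 0 else - M)) ` insert None (Some ` I)"
      using t TI by (intro image_eqI[of _ _ "Some t"]) (auto simp: aug_def)
  qed
qed

theorem lemma1:
  fixes K :: "(real^'d) set" and m :: nat and k :: "nat \<Rightarrow> nat"
    and \<alpha> :: "nat \<Rightarrow> real" and h :: "nat \<Rightarrow> real^'d \<Rightarrow> real"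
  assumes "compact K" and "m \<ge> 1"
    and "\<forall>i\<in>{1..m}. is_hinge (k i) (h i)"
  shows "\<exists>N :: 'd morphnet. dilation_only N \<and>
           (\<forall>x\<in>K. morphnet_eval N x = (\<Sum>i=1..m. \<alpha> i * h i x))"
proof -
  have "\<forall>i\<in>{1..m}. \<exists>p. (fst p = (1::real) \<or> fst p = -1) \<and>
     h i = (\<lambda>x. fst p * Max ((\<lambda>r. fst (snd p) r \<bullet> x + snd (snd p) r) ` {..k i}))"
    using assms(3) unfolding is_hinge_def by fastforce
  then have "\<exists>P. \<forall>i\<in>{1..m}. (fst (P i) = (1::real) \<or> fst (P i) = -1) \<and>
     h i = (\<lambda>x. fst (P i) * Max ((\<lambda>r. fst (snd (P i)) r \<bullet> x + snd (snd (P i)) r) ` {..k i}))"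
    by (rule bchoice)
  then obtain P where P: "\<forall>i\<in>{1..m}. (fst (P i) = (1::real) \<or> fst (P i) = -1) \<and>
     h i = (\<lambda>x. fst (P i) * Max ((\<lambda>r. fst (snd (P i)) r \<bullet> x + snd (snd (P i)) r) ` {..k i}))"
    by blast
  define \<sigma> where "\<sigma> i = fst (P i)" for i
  define W where "W i = fst (snd (P i))" for i
  define Bb where "Bb i = snd (snd (P i))" for i
  have hi: "\<And>i x. i \<in> {1..m} \<Longrightarrow> h i x = \<sigma> i * Max ((\<lambda>r. W i r \<bullet> x + Bb i r) ` {..k i})"
  proof -
    fix i x assume "i \<in> {1..m}"
    then have "h i = (\<lambda>x. fst (P i) * Max ((\<lambda>r. fst (snd (P i)) r \<bullet> x + snd (snd (P i)) r) ` {..k i}))"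
      using P by blast
    then show "h i x = \<sigma> i * Max ((\<lambda>r. W i r \<bullet> x + Bb i r) ` {..k i})"
      unfolding \<sigma>_def W_def Bb_def by simp
  qed
  obtain es :: "'d list" where es: "set es = UNIV" "distinct es"
    using finite_distinct_list[of "UNIV :: 'd set"] by auto
  define n where "n = length es"
  obtain B0 where B0: "\<forall>x\<in>K. norm x \<le> B0"
    using compact_imp_bounded[OF assms(1)] unfolding bounded_iff by auto
  define B where "B = \<bar>B0\<bar>"
  have Bx: "\<bar>x $ i\<bar> \<le> B" if "x \<in> K" for x i
  proof -
    have "\<bar>x $ i\<bar> \<le> norm x" by (rule component_le_norm_cart)
    also have "\<dots> \<le> B0" using B0 that by blast
    finally show ?thesis unfolding B_def by simp
  qed
  have B0le: "0 \<le> B" using B_def by simp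
  define s1 where "s1 j = (\<lambda>k. case k of None \<Rightarrow> -(2*B+1) | Some i \<Rightarrow> if i \<in> {es!j} then 0 else -(2*B+1))" for j
  define L1 where "L1 = map (\<lambda>j. Dil (s1 j)) [0..<n]"
  have z1: "\<And>x j. x \<in> K \<Longrightarrow> j < n \<Longrightarrow> neuron_apply UNIV (L1!j) (\<lambda>i. x $ i) = x $ (es!j)"
  proof -
    fix x j assume x: "x \<in> K" and j: "j < n"
    have "neuron_apply UNIV (L1!j) (\<lambda>i. x $ i) = dil UNIV (\<lambda>i. x $ i) (s1 j)"
      using j by (simp add: L1_def)
    also have "\<dots> = Max ((\<lambda>i. x $ i) ` {es!j})"
      unfolding s1_def by (rule dil_select) (use Bx x in auto)
    finally show "neuron_apply UNIV (L1!j) (\<lambda>i. x $ i) = x $ (es!j)" by simp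
  qed
  define enc where "enc i r = prod_encode (i, r)" for i r
  define q where "q = Suc (\<Sum>i\<le>m. \<Sum>r\<le>k i. enc i r)"
  have encq: "\<And>i r. i \<le> m \<Longrightarrow> r \<le> k i \<Longrightarrow> enc i r < q"
  proof -
    fix i r assume "i \<le> m" "r \<le> k i"
    have "enc i r \<le> (\<Sum>r\<le>k i. enc i r)" using \<open>r \<le> k i\<close> by (intro member_le_sum) auto
    also have "\<dots> \<le> (\<Sum>i\<le>m. \<Sum>r\<le>k i. enc i r)"
      using \<open>i \<le> m\<close> by (intro member_le_sum[where f="\<lambda>i. \<Sum>r\<le>k i. enc i r"]) auto
    finally show "enc i r < q" unfolding q_def by simp
  qed
  define valid where "valid p = (fst (prod_decode p) \<in> {1..m} \<and> snd (prod_decode p) \<le> k (fst (prod_decode p)))" for p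
  define A1 where "A1 p j = (if valid p then W (fst (prod_decode p)) (snd (prod_decode p)) $ (es!j) else 0)" for p j
  define c1 where "c1 p = (if valid p then Bb (fst (prod_decode p)) (snd (prod_decode p)) else 0)" for p
  define yv where "yv x p = (\<Sum>j<n. A1 p j * x $ (es!j)) + c1 p" for x p
  have inner_es: "\<And>w x. (\<Sum>j<n. w $ (es!j) * x $ (es!j)) = w \<bullet> (x :: real^'d)"
  proof -
    fix w x :: "real^'d"
    have bij: "bij_betw ((!) es) {..<n} UNIV"
      using bij_betw_nth[OF es(2)] es(1) n_def by auto
    have "(\<Sum>j<n. w $ (es!j) * x $ (es!j)) = (\<Sum>i\<in>UNIV. w $ i * x $ i)"
      using sum.reindex_bij_betw[OF bij, of "\<lambda>i. w $ i * x $ i"] by simp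
    then show "(\<Sum>j<n. w $ (es!j) * x $ (es!j)) = w \<bullet> x" by (simp add: inner_vec_def)
  qed
  have yv_enc: "\<And>x i r. i \<in> {1..m} \<Longrightarrow> r \<le> k i \<Longrightarrow> yv x (enc i r) = W i r \<bullet> x + Bb i r"
    using inner_es by (simp add: yv_def A1_def c1_def valid_def enc_def)
  define C where "C = (\<Sum>p<q. (\<Sum>j<n. \<bar>A1 p j\<bar> * B) + \<bar>c1 p\<bar>)"
  have yvb: "\<And>x p. x \<in> K \<Longrightarrow> p < q \<Longrightarrow> \<bar>yv x p\<bar> \<le> C"
  proof -
    fix x p assume x: "x \<in> K" and p: "p < q"
    have "\<bar>yv x p\<bar> \<le> (\<Sum>j<n. \<bar>A1 p j * x $ (es!j)\<bar>) + \<bar>c1 p\<bar>"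
      unfolding yv_def by (rule order_trans[OF abs_triangle_ineq add_right_mono[OF sum_abs]])
    also have "\<dots> \<le> (\<Sum>j<n. \<bar>A1 p j\<bar> * B) + \<bar>c1 p\<bar>"
      using Bx[OF x] by (intro add_mono sum_mono) (auto simp: abs_mult intro: mult_left_mono)
    also have "\<dots> \<le> C" unfolding C_def using p B0le
      by (intro member_le_sum[where f="\<lambda>p. (\<Sum>j<n. \<bar>A1 p j\<bar> * B) + \<bar>c1 p\<bar>"]) (auto intro!: add_nonneg_nonneg sum_nonneg)
    finally show "\<bar>yv x p\<bar> \<le> C" .
  qed
  define T where "T i = enc i ` {..k i}" for i
  define s2 where "s2 i = (\<lambda>kk. case kk of None \<Rightarrow> -(2*C+1) | Some p \<Rightarrow> if p \<in> T i then 0 else -(2*C+1))" for i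
  define L2 where "L2 = map (\<lambda>i. Dil (s2 i)) [0..<Suc m]"
  define a where "a i = (if i \<in> {1..m} then \<alpha> i * \<sigma> i else 0)" for i
  define N :: "'d morphnet" where "N = MorphNet L1 A1 c1 q L2 a 0"
  have "dilation_only N" by (auto simp: N_def L1_def L2_def)
  moreover have "\<forall>x\<in>K. morphnet_eval N x = (\<Sum>i=1..m. \<alpha> i * h i x)"
  proof
    fix x assume x: "x \<in> K"
    have y: "(\<lambda>i. (\<Sum>j<length L1. A1 i j * neuron_apply UNIV (L1 ! j) (\<lambda>i. x $ i)) + c1 i) = yv x"
    proof (rule ext)
      fix p
      have "(\<Sum>j<length L1. A1 p j * neuron_apply UNIV (L1 ! j) (\<lambda>i. x $ i)) = (\<Sum>j<n. A1 p j * x $ (es!j))"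
        using z1[OF x] by (intro sum.cong) (auto simp: L1_def)
      then show "(\<Sum>j<length L1. A1 p j * neuron_apply UNIV (L1 ! j) (\<lambda>i. x $ i)) + c1 p = yv x p"
        by (simp add: yv_def)
    qed
    have z2: "neuron_apply {..<q} (L2 ! i) (yv x) = Max ((\<lambda>r. W i r \<bullet> x + Bb i r) ` {..k i})"
      if i: "i \<in> {1..m}" for i
    proof -
      have "neuron_apply {..<q} (L2 ! i) (yv x) = dil {..<q} (yv x) (s2 i)"
        using i by (simp add: L2_def del: upt_Suc)
      also have "\<dots> = Max (yv x ` T i)"
        unfolding s2_def by (rule dil_select) (use i encq yvb[OF x] in \<open>auto simp: T_def\<close>)
      also have "\<dots> = Max ((\<lambda>r. W i r \<bullet> x + Bb i r) ` {..k i})"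
        unfolding T_def image_comp using yv_enc[OF i]
        by (intro arg_cong[where f=Max] image_cong) auto
      finally show ?thesis .
    qed
    have "morphnet_eval N x = (\<Sum>j<Suc m. a j * neuron_apply {..<q} (L2 ! j) (yv x))"
      by (simp add: N_def y Let_def L2_def del: upt_Suc)
    also have "\<dots> = (\<Sum>j=1..m. a j * neuron_apply {..<q} (L2 ! j) (yv x))"
      by (simp add: lessThan_Suc_atMost atLeast0AtMost[symmetric] sum.atLeast_Suc_atMost a_def)
    also have "\<dots> = (\<Sum>i=1..m. \<alpha> i * h i x)"
      by (intro sum.cong refl) (simp add: z2 hi a_def)
    finally show "morphnet_eval N x = (\<Sum>i=1..m. \<alpha> i * h i x)" .
  qed
  ultimately show ?thesis by blast
qed

end
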